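(* Let $X=c_0(\mathbb N)$ or $X=\ell^p(\mathbb N)$ with $1\le p<\infty$, let $\lambda=(\lambda_k)_{k\in\mathbb N}\in\ell^\infty(\mathbb N)$, and define $T_\lambda:X\to X$ by $T_\lambda(x_1,x_2,\ldots)=(\lambda_1x_1,\lambda_2x_2,\ldots)$. (A) The following are equivalent: (i) $T_\lambda$ is recurrent; (ii) $T_\lambda$ is rigid; (iii) $|\lambda_k|=1$ for every $k\in\mathbb N$. (B) The following are equivalent: (i) $T_\lambda$ is uniformly rigid; (ii) there is a sequence $(\theta_k)_{k\in\mathbb N}\subset\mathbb R$ with $\lambda_k=e^{2\pi i\theta_k}$ for every $k$ and $\liminf_{n\to\infty}\sup_{k\in\mathbb N}|e^{2\pi in\theta_k}-1|=0$.
   Context: An operator $T$ on a Banach space $X$ is recurrent if for every non-empty open $U\subset X$ there is a positive integer $k$ with $U\cap T^{-k}(U)\neq\emptyset$; rigid if there is an increasing sequence of positive integers $(k_n)$ with $T^{k_n}x\to x$ for all $x\in X$; uniformly rigid if there is an increasing sequence of positive integers $(k_n)$ with $\|T^{k_n}-I\|\to0$. *)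

theory Defs
  imports "HOL-Analysis.Analysis"
begin

text \<open>Sequence spaces over the complex scalars, realised as carrier sets of
  sequences nat => complex together with their norms (indices start at 0).\<close>

definition c0_space :: "(nat \<Rightarrow> complex) set" where
  "c0_space = {x. x \<longlonglongrightarrow> 0}"

definition c0_norm :: "(nat \<Rightarrow> complex) \<Rightarrow> real" where
  "c0_norm x = (SUP k. cmod (x k))"

definition lp_space :: "real \<Rightarrow> (nat \<Rightarrow> complex) set" where
  "lp_space p = {x. summable (\<lambda>k. cmod (x k) powr p)}"

definition lp_norm :: "real \<Rightarrow> (nat \<Rightarrow> complex) \<Rightarrow> real" where
  "lp_norm p x = (\<Sum>k. cmod (x k) powr p) powr (1 / p)"

definition admissible_space :: "(nat \<Rightarrow> complex) set \<Rightarrow> ((nat \<Rightarrow> complex) \<Rightarrow> real) \<Rightarrow> bool" where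
  "admissible_space X N \<longleftrightarrow>
     (X = c0_space \<and> N = c0_norm) \<or> (\<exists>p::real. 1 \<le> p \<and> X = lp_space p \<and> N = lp_norm p)"

definition diag_op :: "(nat \<Rightarrow> complex) \<Rightarrow> (nat \<Rightarrow> complex) \<Rightarrow> (nat \<Rightarrow> complex)" where
  "diag_op lam x = (\<lambda>k. lam k * x k)"

definition open_in_norm :: "(nat \<Rightarrow> complex) set \<Rightarrow> ((nat \<Rightarrow> complex) \<Rightarrow> real) \<Rightarrow> (nat \<Rightarrow> complex) set \<Rightarrow> bool" where
  "open_in_norm X N U \<longleftrightarrow> U \<subseteq> X \<and> (\<forall>x\<in>U. \<exists>e>0. \<forall>y\<in>X. N (y - x) < e \<longrightarrow> y \<in> U)"

definition recurrent :: "(nat \<Rightarrow> complex) set \<Rightarrow> ((nat \<Rightarrow> complex) \<Rightarrow> real) \<Rightarrow> ((nat \<Rightarrow> complex) \<Rightarrow> (nat \<Rightarrow> complex)) \<Rightarrow> bool" where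
  "recurrent X N T \<longleftrightarrow>
     (\<forall>U. open_in_norm X N U \<and> U \<noteq> {} \<longrightarrow> (\<exists>k::nat. k > 0 \<and> (\<exists>x\<in>U. (T ^^ k) x \<in> U)))"

definition rigid :: "(nat \<Rightarrow> complex) set \<Rightarrow> ((nat \<Rightarrow> complex) \<Rightarrow> real) \<Rightarrow> ((nat \<Rightarrow> complex) \<Rightarrow> (nat \<Rightarrow> complex)) \<Rightarrow> bool" where
  "rigid X N T \<longleftrightarrow>
     (\<exists>ks::nat \<Rightarrow> nat. strict_mono ks \<and> (\<forall>n. ks n > 0) \<and>
        (\<forall>x\<in>X. (\<lambda>n. N ((T ^^ ks n) x - x)) \<longlonglongrightarrow> 0))"

definition op_norm :: "(nat \<Rightarrow> complex) set \<Rightarrow> ((nat \<Rightarrow> complex) \<Rightarrow> real) \<Rightarrow> ((nat \<Rightarrow> complex) \<Rightarrow> (nat \<Rightarrow> complex)) \<Rightarrow> real" where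
  "op_norm X N S = (SUP x\<in>{x\<in>X. N x \<le> 1}. N (S x))"

definition uniformly_rigid :: "(nat \<Rightarrow> complex) set \<Rightarrow> ((nat \<Rightarrow> complex) \<Rightarrow> real) \<Rightarrow> ((nat \<Rightarrow> complex) \<Rightarrow> (nat \<Rightarrow> complex)) \<Rightarrow> bool" where
  "uniformly_rigid X N T \<longleftrightarrow>
     (\<exists>ks::nat \<Rightarrow> nat. strict_mono ks \<and> (\<forall>n. ks n > 0) \<and>
        (\<lambda>n. op_norm X N (\<lambda>x. (T ^^ ks n) x - x)) \<longlonglongrightarrow> 0)"

end

theory Submission imports Defs "HOL-Library.Diagonal_Subsequence" begin
lemma lp_coord:
  assumes p: "1 \<le> p" and x: "x \<in> lp_space p"
  shows "cmod (x k) \<le> lp_norm p x"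
proof -
  have s: "summable (\<lambda>k. cmod (x k) powr p)" using x by (simp add: lp_space_def)
  have "cmod (x k) powr p \<le> (\<Sum>k. cmod (x k) powr p)"
    using sum_le_suminf[OF s, of "{k}"] by simp
  hence "(cmod (x k) powr p) powr (1/p) \<le> (\<Sum>k. cmod (x k) powr p) powr (1/p)"
    using p by (intro powr_mono2) auto
  moreover have "(cmod (x k) powr p) powr (1/p) = cmod (x k)"
    using p by (simp add: powr_powr)
  ultimately show ?thesis by (simp add: lp_norm_def)
qed

lemma powr_diff_bound:
  fixes a b :: complex assumes p: "1 \<le> p"
  shows "cmod (a - b) powr p \<le> 2 powr p * (cmod a powr p + cmod b powr p)"
proof -
  have "cmod (a - b) \<le> 2 * max (cmod a) (cmod b)"
    using norm_triangle_ineq4[of a b] by linarith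
  hence "cmod (a - b) powr p \<le> (2 * max (cmod a) (cmod b)) powr p"
    using p by (intro powr_mono2) auto
  also have "\<dots> = 2 powr p * max (cmod a) (cmod b) powr p"
    by (simp add: powr_mult)
  also have "max (cmod a) (cmod b) powr p \<le> cmod a powr p + cmod b powr p"
    by (cases "cmod a \<le> cmod b") (auto simp: max_def)
  finally show ?thesis by simp
qed

lemma lp_diff:
  assumes p: "1 \<le> p" and x: "x \<in> lp_space p" and y: "y \<in> lp_space p"
  shows "x - y \<in> lp_space p"
proof -
  have s: "summable (\<lambda>k. 2 powr p * (cmod (x k) powr p + cmod (y k) powr p))"
    using x y by (intro summable_mult summable_add) (auto simp: lp_space_def)
  have "summable (\<lambda>k. cmod (x k - y k) powr p)"
    by (rule summable_comparison_test[OF _ s]) (auto intro!: exI powr_diff_bound p)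
  thus ?thesis by (simp add: lp_space_def)
qed

lemma lp_diag:
  assumes p: "1 \<le> p" and x: "x \<in> lp_space p" and d: "\<And>k. cmod (d k) \<le> B"
  shows "(\<lambda>k. d k * x k) \<in> lp_space p \<and> lp_norm p (\<lambda>k. d k * x k) \<le> B * lp_norm p x"
proof -
  have B: "0 \<le> B" using d[of 0] norm_ge_zero[of "d 0"] by linarith
  have s: "summable (\<lambda>k. cmod (x k) powr p)" using x by (simp add: lp_space_def)
  have s2: "summable (\<lambda>k. B powr p * cmod (x k) powr p)" using s by (rule summable_mult)
  have le: "cmod (d k * x k) powr p \<le> B powr p * cmod (x k) powr p" for k
  proof -
    have "cmod (d k * x k) powr p = cmod (d k) powr p * cmod (x k) powr p"
      by (simp add: norm_mult powr_mult)
    also have "\<dots> \<le> B powr p * cmod (x k) powr p"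
      using p d[of k] by (intro mult_right_mono powr_mono2) auto
    finally show ?thesis .
  qed
  have s3: "summable (\<lambda>k. cmod (d k * x k) powr p)"
    by (rule summable_comparison_test[OF _ s2]) (auto intro!: exI le)
  have "(\<Sum>k. cmod (d k * x k) powr p) \<le> (\<Sum>k. B powr p * cmod (x k) powr p)"
    by (rule suminf_le[OF le s3 s2])
  also have "\<dots> = B powr p * (\<Sum>k. cmod (x k) powr p)" using s by (rule suminf_mult)
  finally have "(\<Sum>k. cmod (d k * x k) powr p) powr (1/p) \<le> (B powr p * (\<Sum>k. cmod (x k) powr p)) powr (1/p)"
    using p by (intro powr_mono2) (auto intro!: suminf_nonneg s3)
  also have "\<dots> = B * (\<Sum>k. cmod (x k) powr p) powr (1/p)"
    using p B by (simp add: powr_mult powr_powr suminf_nonneg[OF s])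
  finally show ?thesis using s3 by (simp add: lp_space_def lp_norm_def)
qed

lemma lp_unit:
  assumes p: "1 \<le> p"
  shows "(\<lambda>j. if j = k then c else 0) \<in> lp_space p \<and> lp_norm p (\<lambda>j. if j = k then c else 0) = cmod c"
proof -
  have eq: "(\<lambda>j. cmod (if j = k then c else 0) powr p) = (\<lambda>j. if j = k then cmod c powr p else 0)"
    using p by auto
  have "(\<lambda>j. if j = k then cmod c powr p else 0) sums (cmod c powr p)"
    using sums_single[of k "\<lambda>_. cmod c powr p"] by simp
  thus ?thesis using p unfolding lp_space_def lp_norm_def mem_Collect_eq eq
    by (auto simp: sums_iff powr_powr)
qed

lemma lp_conv:
  assumes p: "1 \<le> p" and x: "x \<in> lp_space p" and d: "\<And>j k. cmod (d j k) \<le> 2"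
    and lim: "\<And>k. (\<lambda>j. d j k) \<longlonglongrightarrow> 0"
  shows "(\<lambda>j. lp_norm p (\<lambda>k. d j k * x k)) \<longlonglongrightarrow> 0"
proof -
  have s: "summable (\<lambda>k. cmod (x k) powr p)" using x by (simp add: lp_space_def)
  have s2: "summable (\<lambda>k. 2 powr p * cmod (x k) powr p)" using s by (rule summable_mult)
  have le: "norm (cmod (d j k * x k) powr p) \<le> 2 powr p * cmod (x k) powr p" for j k
  proof -
    have "cmod (d j k * x k) powr p = cmod (d j k) powr p * cmod (x k) powr p"
      by (simp add: norm_mult powr_mult)
    also have "\<dots> \<le> 2 powr p * cmod (x k) powr p"
      using p d[of j k] by (intro mult_right_mono powr_mono2) auto
    finally show ?thesis by simp
  qed
  have l1: "(\<lambda>j. cmod (d j k * x k) powr p) \<longlonglongrightarrow> 0" for k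
  proof -
    have "(\<lambda>j. cmod (d j k * x k)) \<longlonglongrightarrow> 0"
      using tendsto_norm_zero[OF tendsto_mult_left_zero[OF lim[of k], of "x k"]] by simp
    thus ?thesis using p by (intro tendsto_zero_powrI) auto
  qed
  have "(\<lambda>j. \<Sum>k. cmod (d j k * x k) powr p) \<longlonglongrightarrow> (\<Sum>k. (0::real))"
    using tannerys_theorem[where a="\<lambda>k j. cmod (d j k * x k) powr p" and b="\<lambda>_. 0"
        and M="\<lambda>k. 2 powr p * cmod (x k) powr p" and F=sequentially, OF l1 _ s2]
    using le by (auto simp: always_eventually)
  hence "(\<lambda>j. \<Sum>k. cmod (d j k * x k) powr p) \<longlonglongrightarrow> 0" by simp
  hence "(\<lambda>j. (\<Sum>k. cmod (d j k * x k) powr p) powr (1/p)) \<longlonglongrightarrow> 0"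
  proof (rule tendsto_zero_powrI)
    have "summable (\<lambda>k. cmod (d j k * x k) powr p)" for j
      by (rule summable_comparison_test[OF _ s2]) (use le in auto)
    thus "\<forall>\<^sub>F j in sequentially. 0 \<le> (\<Sum>k. cmod (d j k * x k) powr p)"
      by (auto intro!: always_eventually suminf_nonneg)
  qed (use p in auto)
  thus ?thesis by (simp add: lp_norm_def)
qed

lemma c0_bdd:
  assumes x: "x \<in> c0_space" shows "bdd_above (range (\<lambda>k. cmod (x k)))"
proof -
  have "Bseq x" using x by (auto simp: c0_space_def intro: convergent_imp_Bseq convergentI)
  then obtain K where "\<And>n. norm (x n) \<le> K" by (auto simp: Bseq_def)
  thus ?thesis by (intro bdd_aboveI2[where M=K]) simp
qed

lemma c0_coord:
  assumes x: "x \<in> c0_space" shows "cmod (x k) \<le> c0_norm x"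
  unfolding c0_norm_def by (rule cSUP_upper[OF _ c0_bdd[OF x]]) auto

lemma c0_diff:
  assumes x: "x \<in> c0_space" and y: "y \<in> c0_space" shows "x - y \<in> c0_space"
  using tendsto_diff[of x 0 sequentially y 0] x y by (auto simp: c0_space_def fun_diff_def)

lemma c0_diag:
  assumes x: "x \<in> c0_space" and d: "\<And>k. cmod (d k) \<le> B"
  shows "(\<lambda>k. d k * x k) \<in> c0_space \<and> c0_norm (\<lambda>k. d k * x k) \<le> B * c0_norm x"
proof -
  have B: "0 \<le> B" using d[of 0] norm_ge_zero[of "d 0"] by linarith
  have le: "cmod (d k * x k) \<le> B * cmod (x k)" for k
    unfolding norm_mult by (rule mult_right_mono[OF d norm_ge_zero])
  have xl: "x \<longlonglongrightarrow> 0" using x by (simp add: c0_space_def)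
  have "(\<lambda>k. B * cmod (x k)) \<longlonglongrightarrow> 0"
    using tendsto_mult_right_zero[OF tendsto_norm_zero[OF xl]] by simp
  hence "(\<lambda>k. d k * x k) \<longlonglongrightarrow> 0"
    by (rule Lim_null_comparison[OF always_eventually, rotated]) (rule allI, rule le)
  moreover have "c0_norm (\<lambda>k. d k * x k) \<le> B * c0_norm x"
    unfolding c0_norm_def
  proof (rule cSUP_least)
    fix k
    have "B * cmod (x k) \<le> B * c0_norm x" by (rule mult_left_mono[OF c0_coord[OF x] B])
    thus "cmod (d k * x k) \<le> B * (SUP k. cmod (x k))" using le[of k] unfolding c0_norm_def by linarith
  qed simp
  ultimately show ?thesis by (simp add: c0_space_def)
qed

lemma c0_unit:
  "(\<lambda>j. if j = k then c else 0) \<in> c0_space \<and> c0_norm (\<lambda>j. if j = k then c else 0) = cmod c"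
proof
  have "\<forall>\<^sub>F j in sequentially. (if j = k then c else 0) = 0"
    unfolding eventually_sequentially by (rule exI[of _ "Suc k"]) simp
  thus "(\<lambda>j. if j = k then c else 0) \<in> c0_space"
    unfolding c0_space_def mem_Collect_eq by (rule tendsto_eventually)
  have bd: "cmod (if j = k then c else 0) \<le> cmod c" for j by simp
  show "c0_norm (\<lambda>j. if j = k then c else 0) = cmod c"
    unfolding c0_norm_def
  proof (rule antisym)
    show "(SUP j. cmod (if j = k then c else 0)) \<le> cmod c"
      by (rule cSUP_least) (simp, rule bd)
    have "cmod ((\<lambda>j. if j = k then c else 0) k) \<le> (SUP j. cmod (if j = k then c else 0))"
      by (rule cSUP_upper) (simp, rule bdd_aboveI2, rule bd)
    thus "cmod c \<le> (SUP j. cmod (if j = k then c else 0))" by simp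
  qed
qed

lemma c0_conv:
  assumes x: "x \<in> c0_space" and d: "\<And>j k. cmod (d j k) \<le> 2"
    and lim: "\<And>k. (\<lambda>j. d j k) \<longlonglongrightarrow> 0"
  shows "(\<lambda>j. c0_norm (\<lambda>k. d j k * x k)) \<longlonglongrightarrow> 0"
proof (rule LIMSEQ_I)
  fix r :: real assume r: "0 < r"
  have xl: "x \<longlonglongrightarrow> 0" using x by (simp add: c0_space_def)
  then obtain K where K: "\<And>k. k \<ge> K \<Longrightarrow> cmod (x k) < r / 4"
    using LIMSEQ_D[OF xl, of "r/4"] r by auto
  have ev1: "\<forall>\<^sub>F j in sequentially. cmod (d j k * x k) < r / 2" for k
  proof -
    have "(\<lambda>j. d j k * x k) \<longlonglongrightarrow> 0" using tendsto_mult_left_zero[OF lim[of k]] by simp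
    from tendsto_iff[THEN iffD1, OF this, rule_format, of "r/2"] r
    show ?thesis by (simp add: dist_norm)
  qed
  have "\<forall>\<^sub>F j in sequentially. \<forall>k\<in>{..<K}. cmod (d j k * x k) < r / 2"
    by (rule eventually_ball_finite) (simp, intro ballI ev1)
  then obtain J where J: "\<And>j k. j \<ge> J \<Longrightarrow> k < K \<Longrightarrow> cmod (d j k * x k) < r / 2"
    by (auto simp: eventually_sequentially)
  show "\<exists>no. \<forall>n\<ge>no. norm (c0_norm (\<lambda>k. d n k * x k) - 0) < r"
  proof (intro exI allI impI)
    fix j assume j: "J \<le> j"
    have bnd: "cmod (d j k * x k) \<le> r / 2" for k
    proof (cases "k < K")
      case True thus ?thesis using J[OF j True] by simp
    next
      case False
      hence "cmod (x k) < r/4" using K by auto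
      hence "cmod (d j k) * cmod (x k) \<le> 2 * (r/4)"
        using d[of j k] by (intro mult_mono) auto
      thus ?thesis by (simp add: norm_mult)
    qed
    have up: "c0_norm (\<lambda>k. d j k * x k) \<le> r / 2"
      unfolding c0_norm_def by (rule cSUP_least) (simp, rule bnd)
    have lo: "0 \<le> c0_norm (\<lambda>k. d j k * x k)"
      unfolding c0_norm_def
      by (rule order_trans[OF norm_ge_zero cSUP_upper[of 0]]) (simp, rule bdd_aboveI2, rule bnd)
    show "norm (c0_norm (\<lambda>k. d j k * x k) - 0) < r" using up lo r by simp
  qed
qed

definition gs :: "(nat \<Rightarrow> complex) set \<Rightarrow> ((nat \<Rightarrow> complex) \<Rightarrow> real) \<Rightarrow> bool" where
 "gs X N \<longleftrightarrow>
   (\<forall>x\<in>X. \<forall>y\<in>X. x - y \<in> X) \<and>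
   (\<forall>x\<in>X. \<forall>d B. (\<forall>k. cmod (d k) \<le> B) \<longrightarrow> (\<lambda>k. d k * x k) \<in> X \<and> N (\<lambda>k. d k * x k) \<le> B * N x) \<and>
   (\<forall>x\<in>X. \<forall>k. cmod (x k) \<le> N x) \<and>
   (\<forall>k c. (\<lambda>j. if j = k then c else 0) \<in> X \<and> N (\<lambda>j. if j = k then c else 0) = cmod c) \<and>
   (\<forall>x\<in>X. \<forall>d::nat\<Rightarrow>nat\<Rightarrow>complex. (\<forall>j k. cmod (d j k) \<le> 2) \<and> (\<forall>k. (\<lambda>j. d j k) \<longlonglongrightarrow> 0)
        \<longrightarrow> (\<lambda>j. N (\<lambda>k. d j k * x k)) \<longlonglongrightarrow> 0)"

lemma gs_c0: "gs c0_space c0_norm"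
  unfolding gs_def by (auto simp: c0_diff c0_coord c0_unit c0_conv intro!: c0_diag[THEN conjunct1] c0_diag[THEN conjunct2])

lemma gs_lp: "1 \<le> p \<Longrightarrow> gs (lp_space p) (lp_norm p)"
  unfolding gs_def by (auto simp: lp_diff lp_coord lp_unit lp_conv intro!: lp_diag[THEN conjunct1] lp_diag[THEN conjunct2])

lemma gs_adm: assumes "admissible_space X N" shows "gs X N"
  using assms gs_c0 gs_lp unfolding admissible_space_def by auto

lemma diag_pow: "(diag_op lam ^^ n) x = (\<lambda>k. lam k ^ n * x k)"
  by (induction n) (auto simp: diag_op_def mult.assoc)

lemma gs_diff: "gs X N \<Longrightarrow> x \<in> X \<Longrightarrow> y \<in> X \<Longrightarrow> x - y \<in> X"
  unfolding gs_def by blast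
lemma gs_diag: "gs X N \<Longrightarrow> x \<in> X \<Longrightarrow> (\<And>k. cmod (d k) \<le> B) \<Longrightarrow>
    (\<lambda>k. d k * x k) \<in> X \<and> N (\<lambda>k. d k * x k) \<le> B * N x"
  unfolding gs_def by blast
lemma gs_coord: "gs X N \<Longrightarrow> x \<in> X \<Longrightarrow> cmod (x k) \<le> N x"
  unfolding gs_def by blast
lemma gs_unit: "gs X N \<Longrightarrow> (\<lambda>j. if j = k then c else 0) \<in> X \<and> N (\<lambda>j. if j = k then c else 0) = cmod c"
  unfolding gs_def by blast
lemma gs_conv: "gs X N \<Longrightarrow> x \<in> X \<Longrightarrow> (\<And>j k. cmod (d j k) \<le> 2) \<Longrightarrow> (\<And>k. (\<lambda>j. d j k) \<longlonglongrightarrow> 0)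
   \<Longrightarrow> (\<lambda>j. N (\<lambda>k. d j k * x k)) \<longlonglongrightarrow> 0"
  unfolding gs_def by blast

lemma pow_mem:
  assumes g: "gs X N" and b: "bounded (range lam)" and x: "x \<in> X"
  shows "(diag_op lam ^^ n) x \<in> X"
proof -
  obtain B where B: "\<And>k. cmod (lam k) \<le> B" using b by (auto simp: bounded_iff)
  have "cmod (lam k ^ n) \<le> B ^ n" for k
    unfolding norm_power by (rule power_mono[OF B norm_ge_zero])
  thus ?thesis unfolding diag_pow using gs_diag[OF g x, of "\<lambda>k. lam k ^ n" "B^n"] by blast
qed

lemma rigid_imp_recurrent:
  assumes g: "gs X N" and b: "bounded (range lam)" and r: "rigid X N (diag_op lam)"
  shows "recurrent X N (diag_op lam)"
  unfolding recurrent_def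
proof (intro allI impI)
  fix U assume U: "open_in_norm X N U \<and> U \<noteq> {}"
  then obtain x where xU: "x \<in> U" by auto
  with U obtain e where e: "e > 0" "\<And>y. y \<in> X \<Longrightarrow> N (y - x) < e \<Longrightarrow> y \<in> U"
    unfolding open_in_norm_def by blast
  have xX: "x \<in> X" using U xU unfolding open_in_norm_def by auto
  from r obtain ks where ks: "\<And>n. ks n > 0" "(\<lambda>n. N ((diag_op lam ^^ ks n) x - x)) \<longlonglongrightarrow> 0"
    unfolding rigid_def using xX by blast
  from LIMSEQ_D[OF ks(2) e(1)] obtain n0 where "\<And>n. n \<ge> n0 \<Longrightarrow> norm (N ((diag_op lam ^^ ks n) x - x) - 0) < e"
    by blast
  hence "N ((diag_op lam ^^ ks n0) x - x) < e" by fastforce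
  hence "(diag_op lam ^^ ks n0) x \<in> U" using e(2) pow_mem[OF g b xX] by blast
  thus "\<exists>k>0. \<exists>x\<in>U. (diag_op lam ^^ k) x \<in> U" using ks(1)[of n0] xU by blast
qed

lemma sep_delta:
  fixes a :: real assumes a0: "0 \<le> a" and a1: "a \<noteq> 1"
  obtains \<delta> where "\<delta> > 0" "\<And>n c. n > 0 \<Longrightarrow> \<bar>c - 1\<bar> < \<delta> \<Longrightarrow> \<bar>a ^ n * c - 1\<bar> < \<delta> \<Longrightarrow> False"
proof (cases "a < 1")
  case True
  show ?thesis
  proof (rule that[of "(1 - a) / 3"])
    show "(1 - a) / 3 > 0" using True by simp
    fix n :: nat and c :: real assume n: "n > 0" and c: "\<bar>c - 1\<bar> < (1 - a) / 3"
      and ac: "\<bar>a ^ n * c - 1\<bar> < (1 - a) / 3"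
    have cb: "3 * c - 3 < 1 - a" "3 - 3 * c < 1 - a" using abs_less_iff[THEN iffD1, OF c] by (auto simp: field_simps)
    have acb: "3 - 3 * (a ^ n * c) < 1 - a" using abs_less_iff[THEN iffD1, OF ac] by (auto simp: field_simps)
    have c0: "0 \<le> c" using cb True a0 by linarith
    have "a ^ n \<le> a ^ 1" using n a0 True by (intro power_decreasing) auto
    hence "a ^ n * c \<le> a * c" using c0 by (simp add: mult_right_mono)
    have "a * (3 * c) \<le> a * (4 - a)" using cb a0 by (intro mult_left_mono) auto
    moreover have "(1 - a) * (2 - a) > 0" using True by (intro mult_pos_pos) auto
    ultimately show False using acb \<open>a ^ n * c \<le> a * c\<close> by (simp add: algebra_simps)
  qed
next
  case False
  hence a: "a > 1" using a1 by simp
  show ?thesis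
  proof (rule that[of "(a - 1) / (3 * a)"])
    show "(a - 1) / (3 * a) > 0" using a by simp
    fix n :: nat and c :: real assume n: "n > 0" and c: "\<bar>c - 1\<bar> < (a - 1) / (3 * a)"
      and ac: "\<bar>a ^ n * c - 1\<bar> < (a - 1) / (3 * a)"
    have cb: "3 * a * c - 3 * a < a - 1" "3 * a - 3 * a * c < a - 1" using abs_less_iff[THEN iffD1, OF c] a by (auto simp: field_simps)
    have acb: "3 * a * (a ^ n * c) - 3 * a < a - 1" using abs_less_iff[THEN iffD1, OF ac] a by (auto simp: field_simps)
    have "0 < a * c" using cb a by (simp add: algebra_simps)
    hence c0: "0 \<le> c" using a by (simp add: zero_less_mult_iff)
    have "a ^ 1 \<le> a ^ n" using n a by (intro power_increasing) auto
    hence "a * c \<le> a ^ n * c" using c0 by (simp add: mult_right_mono)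
    hence f1: "a * (a * c) \<le> a * (a ^ n * c)" using a by simp
    have "3 * a - (a - 1) < 3 * a * c" using cb by linarith
    hence "a * (3 * a - (a - 1)) \<le> a * (3 * a * c)" using a by (intro mult_left_mono) auto
    hence f2: "2 * (a * a) + a \<le> 3 * (a * (a * c))" by (simp add: algebra_simps)
    have f3: "3 * (a * (a ^ n * c)) < 4 * a - 1" using acb by (simp add: algebra_simps)
    have "(2 * a - 1) * (a - 1) > 0" using a by (intro mult_pos_pos) auto
    hence f4: "2 * (a * a) - 3 * a + 1 > 0" by (simp add: algebra_simps)
    show False using f1 f2 f3 f4 by linarith
  qed
qed

lemma recurrent_unit:
  assumes g: "gs X N" and r: "recurrent X N (diag_op lam)"
  shows "cmod (lam k) = 1"
proof (rule ccontr)
  assume ne: "cmod (lam k) \<noteq> 1"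
  obtain \<delta> where dp: "\<delta> > 0" and sep: "\<And>n c. n > 0 \<Longrightarrow> \<bar>c - 1\<bar> < \<delta> \<Longrightarrow> \<bar>cmod (lam k) ^ n * c - 1\<bar> < \<delta> \<Longrightarrow> False"
    using sep_delta[OF norm_ge_zero ne] by metis
  define U where "U = {y \<in> X. \<bar>cmod (y k) - 1\<bar> < \<delta>}"
  have op: "open_in_norm X N U"
    unfolding open_in_norm_def
  proof (intro conjI ballI)
    show "U \<subseteq> X" by (auto simp: U_def)
    fix x assume x: "x \<in> U"
    show "\<exists>e>0. \<forall>y\<in>X. N (y - x) < e \<longrightarrow> y \<in> U"
    proof (intro exI[of _ "\<delta> - \<bar>cmod (x k) - 1\<bar>"] conjI ballI impI)
      show "\<delta> - \<bar>cmod (x k) - 1\<bar> > 0" using x by (auto simp: U_def)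
      fix y assume y: "y \<in> X" and ny: "N (y - x) < \<delta> - \<bar>cmod (x k) - 1\<bar>"
      have "cmod ((y - x) k) \<le> N (y - x)" using gs_coord[OF g gs_diff[OF g y]] x by (auto simp: U_def)
      hence "cmod (y k - x k) < \<delta> - \<bar>cmod (x k) - 1\<bar>" using ny by simp
      moreover have "\<bar>cmod (y k) - cmod (x k)\<bar> \<le> cmod (y k - x k)" by (rule norm_triangle_ineq3)
      ultimately show "y \<in> U" using y by (auto simp: U_def)
    qed
  qed
  have "(\<lambda>j. if j = k then 1 else 0) \<in> U" using gs_unit[OF g, of k 1] dp by (simp add: U_def)
  hence "U \<noteq> {}" by blast
  with r op obtain n x where n: "n > 0" and x: "x \<in> U" and tx: "(diag_op lam ^^ n) x \<in> U"
    unfolding recurrent_def by blast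
  have "\<bar>cmod (lam k) ^ n * cmod (x k) - 1\<bar> < \<delta>"
    using tx by (simp add: U_def diag_pow norm_mult norm_power)
  thus False using sep[OF n] x by (auto simp: U_def)
qed

lemma exists_ks:
  fixes lam :: "nat \<Rightarrow> complex"
  assumes u: "\<And>k. cmod (lam k) = 1"
  shows "\<exists>ks. strict_mono ks \<and> (\<forall>n. ks n > 0) \<and> (\<forall>k. (\<lambda>n. lam k ^ ks n) \<longlonglongrightarrow> 1)"
proof -
  interpret S: subseqs "\<lambda>k s. convergent (\<lambda>n. lam k ^ s n)"
  proof
    fix k and s :: "nat \<Rightarrow> nat" assume "strict_mono s"
    have sc: "seq_compact (cball (0::complex) 1)" by (rule compact_imp_seq_compact) simp
    have "\<forall>n. lam k ^ s n \<in> cball 0 1" using u by (simp add: norm_power)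
    from seq_compactE[OF sc this] obtain l r where "strict_mono r" "((\<lambda>n. lam k ^ s n) \<circ> r) \<longlonglongrightarrow> l"
      by metis
    thus "\<exists>r'. strict_mono r' \<and> convergent (\<lambda>n. lam k ^ (s \<circ> r') n)"
      by (auto simp: convergent_def o_def)
  qed
  define r where "r = S.diagseq"
  have r: "strict_mono r" unfolding r_def by (rule S.subseq_diagseq)
  have conv: "convergent (\<lambda>n. lam k ^ r n)" for k
  proof -
    have "convergent (\<lambda>n. lam k ^ (S.diagseq \<circ> (+) (Suc k)) n)"
    proof (rule S.diagseq_holds)
      fix r' s :: "nat \<Rightarrow> nat" and n assume "strict_mono r'" "convergent (\<lambda>m. lam n ^ s m)"
      thus "convergent (\<lambda>m. lam n ^ (s \<circ> r') m)"
        unfolding convergent_def using LIMSEQ_subseq_LIMSEQ by (fastforce simp: o_def)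
    qed
    then obtain L where "(\<lambda>n. lam k ^ S.diagseq (n + Suc k)) \<longlonglongrightarrow> L"
      by (auto simp: convergent_def o_def add.commute)
    hence "(\<lambda>n. lam k ^ S.diagseq n) \<longlonglongrightarrow> L" by (rule LIMSEQ_offset)
    thus ?thesis by (auto simp: convergent_def r_def)
  qed
  define a where "a j = r j + j + 1" for j
  define ks where "ks j = r (a j) - r j" for j
  have rdiff: "r m - r n \<ge> m - n" if "n \<le> m" for m n
  proof -
    have "r n + (m - n) \<le> r m"
      using that
    proof (induction m)
      case (Suc m)
      show ?case
      proof (cases "n \<le> m")
        case True
        with Suc have "r n + (m - n) \<le> r m" by simp
        moreover have "r m < r (Suc m)" using r by (simp add: strict_mono_def)
        ultimately show ?thesis using True by linarith
      next
        case False hence "n = Suc m" using Suc by simp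
        thus ?thesis by simp
      qed
    qed simp
    thus ?thesis by linarith
  qed
  have rle: "r n \<le> r m" if "n \<le> m" for m n using r that by (simp add: strict_mono_less_eq)
  have am: "a j > j" for j by (simp add: a_def)
  have ks_pos: "ks j > 0" for j
    using r am[of j] by (simp add: ks_def strict_mono_def)
  have ks_mono: "strict_mono ks"
  proof (rule strict_mono_Suc_iff[THEN iffD2], intro allI)
    fix j
    have "a j \<le> a (Suc j)" using rle[of j "Suc j"] by (simp add: a_def)
    have "r (a (Suc j)) - r (a j) \<ge> a (Suc j) - a j" using rdiff \<open>a j \<le> a (Suc j)\<close> by blast
    moreover have "a (Suc j) - a j = r (Suc j) - r j + 1" using rle[of j "Suc j"] by (simp add: a_def)
    moreover have "r (a j) \<ge> r j" "r (Suc j) \<ge> r j" "r (a j) \<le> r (a (Suc j))"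
      using rle am \<open>a j \<le> a (Suc j)\<close> by (auto simp: less_imp_le)
    ultimately show "ks j < ks (Suc j)" unfolding ks_def by linarith
  qed
  have a_lim: "filterlim a at_top sequentially"
  proof (rule filterlim_subseq)
    have "r n < r (Suc n)" for n using r by (simp add: strict_mono_Suc_iff)
    thus "strict_mono a" unfolding strict_mono_Suc_iff a_def by (simp add: less_SucI)
  qed
  have lim: "(\<lambda>j. lam k ^ ks j) \<longlonglongrightarrow> 1" for k
  proof -
    obtain L where L: "(\<lambda>n. lam k ^ r n) \<longlonglongrightarrow> L" using conv[of k] by (auto simp: convergent_def)
    have L1: "cmod L = 1"
    proof -
      have "(\<lambda>n. cmod (lam k ^ r n)) \<longlonglongrightarrow> cmod L" by (rule tendsto_norm[OF L])
      moreover have "(\<lambda>n. cmod (lam k ^ r n)) = (\<lambda>n. 1)" using u by (simp add: norm_power)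
      ultimately have "(\<lambda>n. 1::real) \<longlonglongrightarrow> cmod L" by simp
      from LIMSEQ_unique[OF this tendsto_const] show ?thesis by simp
    qed
    have La: "(\<lambda>j. lam k ^ r (a j)) \<longlonglongrightarrow> L"
      using filterlim_compose[OF L a_lim] by (simp add: o_def)
    have eq: "lam k ^ ks j = lam k ^ r (a j) * cnj (lam k ^ r j)" for j
    proof -
      have "r j \<le> r (a j)" using rle am[of j] by (simp add: less_imp_le)
      hence "lam k ^ r (a j) = lam k ^ ks j * lam k ^ r j"
        by (simp add: ks_def power_add[symmetric])
      moreover have "lam k ^ r j * cnj (lam k ^ r j) = 1"
      proof -
        have "lam k ^ r j * cnj (lam k ^ r j) = complex_of_real (cmod (lam k ^ r j) ^ 2)"
          by (rule complex_norm_square[symmetric])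
        also have "cmod (lam k ^ r j) = 1" using u[of k] by (simp add: norm_power)
        finally show ?thesis by simp
      qed
      ultimately show ?thesis by (simp add: mult.assoc)
    qed
    have "(\<lambda>j. lam k ^ r (a j) * cnj (lam k ^ r j)) \<longlonglongrightarrow> L * cnj L"
      by (intro tendsto_intros La L)
    moreover have "L * cnj L = 1"
    proof -
      have "L * cnj L = complex_of_real (cmod L ^ 2)" by (rule complex_norm_square[symmetric])
      thus ?thesis using L1 by simp
    qed
    ultimately show ?thesis unfolding eq by simp
  qed
  show ?thesis using ks_mono ks_pos lim by blast
qed

lemma unit_rigid:
  assumes g: "gs X N" and u: "\<And>k. cmod (lam k) = 1"
  shows "rigid X N (diag_op lam)"
proof -
  obtain ks where ks: "strict_mono ks" "\<And>n. ks n > 0" "\<And>k. (\<lambda>n. lam k ^ ks n) \<longlonglongrightarrow> 1"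
  proof -
    have "\<exists>ks. strict_mono ks \<and> (\<forall>n. ks n > 0) \<and> (\<forall>k. (\<lambda>n. lam k ^ ks n) \<longlonglongrightarrow> 1)"
      by (rule exists_ks) (rule u)
    thus ?thesis using that by blast
  qed
  have "(\<lambda>n. N ((diag_op lam ^^ ks n) x - x)) \<longlonglongrightarrow> 0" if x: "x \<in> X" for x
  proof -
    have eq: "(diag_op lam ^^ ks n) x - x = (\<lambda>k. (lam k ^ ks n - 1) * x k)" for n
      by (auto simp: diag_pow fun_eq_iff algebra_simps)
    have b: "cmod (lam k ^ ks n - 1) \<le> 2" for n k
      using norm_triangle_ineq4[of "lam k ^ ks n" 1] u[of k] by (simp add: norm_power)
    have l: "(\<lambda>n. lam k ^ ks n - 1) \<longlonglongrightarrow> 0" for k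
      using tendsto_diff[OF ks(3)[of k] tendsto_const[of 1]] by simp
    show ?thesis unfolding eq by (rule gs_conv[OF g x b l])
  qed
  thus ?thesis unfolding rigid_def using ks by blast
qed

lemma opn:
  assumes g: "gs X N" and d: "\<And>k. cmod (d k) \<le> B"
  shows "(\<forall>k. cmod (d k) \<le> op_norm X N (\<lambda>x k. d k * x k)) \<and> op_norm X N (\<lambda>x k. d k * x k) \<le> B
     \<and> 0 \<le> op_norm X N (\<lambda>x k. d k * x k)"
proof -
  define S where "S = {x\<in>X. N x \<le> 1}"
  define f where "f x = N (\<lambda>k. d k * x k)" for x
  have B0: "0 \<le> B" using d[of 0] norm_ge_zero[of "d 0"] by linarith
  have bnd: "f x \<le> B" if "x \<in> S" for x
  proof -
    have "f x \<le> B * N x" using gs_diag[OF g _ d, of x] that by (auto simp: S_def f_def)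
    also have "\<dots> \<le> B * 1" using that B0 by (intro mult_left_mono) (auto simp: S_def)
    finally show ?thesis by simp
  qed
  have bdd: "bdd_above (f ` S)" using bnd by (rule bdd_aboveI2)
  have on: "op_norm X N (\<lambda>x k. d k * x k) = (SUP x\<in>S. f x)" by (simp add: op_norm_def S_def f_def)
  have ek: "(\<lambda>j. if j = k then 1 else 0) \<in> S" for k using gs_unit[OF g, of k 1] by (simp add: S_def)
  have fek: "f (\<lambda>j. if j = k then 1 else 0) = cmod (d k)" for k
  proof -
    have "(\<lambda>j. d j * (if j = k then 1 else 0)) = (\<lambda>j. if j = k then d k else 0)" by auto
    thus ?thesis using gs_unit[OF g, of k "d k"] by (simp add: f_def)
  qed
  have z: "(\<lambda>j. 0) \<in> S" "f (\<lambda>j. 0) = 0" using gs_unit[OF g, of 0 0] by (simp_all add: S_def f_def)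
  have "cmod (d k) \<le> (SUP x\<in>S. f x)" for k
    using cSUP_upper[OF ek[of k] bdd] fek[of k] by simp
  moreover have "(SUP x\<in>S. f x) \<le> B" using z(1) bnd by (intro cSUP_least) auto
  moreover have "0 \<le> (SUP x\<in>S. f x)" using cSUP_upper[OF z(1) bdd] z(2) by simp
  ultimately show ?thesis unfolding on by blast
qed

lemma unit_of_lim:
  assumes ks: "\<And>n. ks n > (0::nat)" and l: "(\<lambda>n. lam k ^ ks n) \<longlonglongrightarrow> (1::complex)"
  shows "cmod (lam k) = 1"
proof -
  define a where "a = cmod (lam k)"
  have la: "(\<lambda>n. a ^ ks n) \<longlonglongrightarrow> 1" using tendsto_norm[OF l] by (simp add: a_def norm_power)
  have a0: "0 \<le> a" by (simp add: a_def)
  show ?thesis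
  proof (rule ccontr)
    assume "cmod (lam k) \<noteq> 1"
    hence "a < 1 \<or> a > 1" by (auto simp: a_def)
    thus False
    proof
      assume a1: "a < 1"
      have "a ^ ks n \<le> a ^ 1" for n using ks[of n] a0 a1 by (intro power_decreasing) auto
      hence "1 \<le> a" using LIMSEQ_le_const2[OF la] by auto
      thus False using a1 by simp
    next
      assume a1: "a > 1"
      have "a ^ 1 \<le> a ^ ks n" for n using ks[of n] a1 by (intro power_increasing) auto
      hence "a \<le> 1" using LIMSEQ_le_const[OF la] by auto
      thus False using a1 by simp
    qed
  qed
qed

lemma expn:
  assumes "\<And>k. lam k = exp (2 * pi * \<i> * complex_of_real (\<theta> k))"
  shows "exp (2 * pi * \<i> * of_nat n * complex_of_real (\<theta> k)) = lam k ^ n"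
proof -
  have "2 * pi * \<i> * of_nat n * complex_of_real (\<theta> k) = of_nat n * (2 * pi * \<i> * complex_of_real (\<theta> k))"
    by (simp add: algebra_simps)
  hence "exp (2 * pi * \<i> * of_nat n * complex_of_real (\<theta> k)) = exp (of_nat n * (2 * pi * \<i> * complex_of_real (\<theta> k)))"
    by (simp only:)
  also have "\<dots> = exp (2 * pi * \<i> * complex_of_real (\<theta> k)) ^ n" by (rule exp_of_nat_mult)
  also have "\<dots> = lam k ^ n" by (simp only: assms[symmetric])
  finally show ?thesis .
qed

lemma liminf_freq:
  assumes l: "liminf (\<lambda>n. ereal (s n)) = 0" and e: "(e::real) > 0"
  shows "\<exists>n\<ge>M. s n < e"
proof (rule ccontr)
  assume "\<not> (\<exists>n\<ge>M. s n < e)"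
  hence "\<forall>\<^sub>F n in sequentially. ereal e \<le> ereal (s n)"
    by (auto simp: eventually_sequentially not_less)
  hence "ereal e \<le> liminf (\<lambda>n. ereal (s n))" by (rule Liminf_bounded)
  thus False using l e by simp
qed

primrec pick :: "(nat \<Rightarrow> real) \<Rightarrow> nat \<Rightarrow> nat" where
  "pick s 0 = (SOME n. n \<ge> 1 \<and> s n < 1)"
| "pick s (Suc j) = (SOME n. n \<ge> Suc (pick s j) \<and> s n < 1 / real (Suc (Suc j)))"

lemma pick_prop:
  assumes f: "\<And>e M. e > 0 \<Longrightarrow> \<exists>n\<ge>M. s n < e"
  shows "pick s j \<ge> 1 \<and> s (pick s j) < 1 / real (Suc j) \<and> pick s (Suc j) > pick s j"
proof -
  have A: "pick s j \<ge> 1 \<and> s (pick s j) < 1 / real (Suc j)" for j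
  proof (cases j)
    case 0
    have "\<exists>n. n \<ge> 1 \<and> s n < 1" using f[of 1 1] by auto
    hence "pick s 0 \<ge> 1 \<and> s (pick s 0) < 1" unfolding pick.simps by (rule someI_ex)
    thus ?thesis using 0 by simp
  next
    case (Suc i)
    have "\<exists>n. n \<ge> Suc (pick s i) \<and> s n < 1 / real (Suc (Suc i))" using f[of "1 / real (Suc (Suc i))"] by auto
    hence "pick s (Suc i) \<ge> Suc (pick s i) \<and> s (pick s (Suc i)) < 1 / real (Suc (Suc i))"
      unfolding pick.simps by (rule someI_ex)
    thus ?thesis using Suc by simp
  qed
  have "\<exists>n. n \<ge> Suc (pick s j) \<and> s n < 1 / real (Suc (Suc j))" using f[of "1 / real (Suc (Suc j))"] by auto
  hence "pick s (Suc j) \<ge> Suc (pick s j)" unfolding pick.simps by (rule someI2_ex) auto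
  thus ?thesis using A[of j] by simp
qed

lemma powfun: "(\<lambda>x. (diag_op lam ^^ n) x - x) = (\<lambda>x k. (lam k ^ n - 1) * x k)"
  by (auto simp: diag_pow fun_eq_iff algebra_simps)

lemma partB:
  assumes g: "gs X N" and b: "bounded (range lam)"
  shows "uniformly_rigid X N (diag_op lam) \<longleftrightarrow>
            (\<exists>\<theta>::nat \<Rightarrow> real. (\<forall>k. lam k = exp (2 * pi * \<i> * complex_of_real (\<theta> k)))
               \<and> liminf (\<lambda>n::nat. ereal (SUP k. cmod (exp (2 * pi * \<i> * of_nat n * complex_of_real (\<theta> k)) - 1))) = 0)"
    (is "?L \<longleftrightarrow> ?R")
proof
  define s where "s n = (SUP k. cmod (lam k ^ n - 1))" for n
  assume ?L
  then obtain ks where ks: "strict_mono ks" "\<And>n. ks n > 0"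
    "(\<lambda>n. op_norm X N (\<lambda>x. (diag_op lam ^^ ks n) x - x)) \<longlonglongrightarrow> 0"
    unfolding uniformly_rigid_def by blast
  obtain Bl where Bl: "\<And>k. cmod (lam k) \<le> Bl" using b by (auto simp: bounded_iff)
  have dB: "cmod (lam k ^ n - 1) \<le> Bl ^ n + 1" for k n
  proof -
    have "cmod (lam k ^ n) \<le> Bl ^ n" unfolding norm_power by (rule power_mono[OF Bl norm_ge_zero])
    thus ?thesis using norm_triangle_ineq4[of "lam k ^ n" 1] by simp
  qed
  define opn where "opn n = op_norm X N (\<lambda>x k. (lam k ^ n - 1) * x k)" for n
  have opl: "cmod (lam k ^ n - 1) \<le> opn n" for k n
    using opn[OF g, of "\<lambda>k. lam k ^ n - 1" "Bl^n+1"] dB unfolding opn_def by blast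
  have op0: "(\<lambda>j. opn (ks j)) \<longlonglongrightarrow> 0" using ks(3) unfolding powfun opn_def .
  have unit: "cmod (lam k) = 1" for k
  proof (rule unit_of_lim[OF ks(2)])
    have "(\<lambda>j. lam k ^ ks j - 1) \<longlonglongrightarrow> 0"
      by (rule Lim_null_comparison[OF always_eventually op0]) (use opl in auto)
    from tendsto_add[OF this tendsto_const[of 1]] show "(\<lambda>j. lam k ^ ks j) \<longlonglongrightarrow> 1" by simp
  qed
  define \<theta> where "\<theta> k = Arg (lam k) / (2 * pi)" for k
  have th: "lam k = exp (2 * pi * \<i> * complex_of_real (\<theta> k))" for k
  proof -
    have ne: "lam k \<noteq> 0" using unit[of k] by auto
    have "2 * pi * \<i> * complex_of_real (\<theta> k) = \<i> * complex_of_real (Arg (lam k))"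
      by (simp add: \<theta>_def field_simps)
    hence "exp (2 * pi * \<i> * complex_of_real (\<theta> k)) = exp (\<i> * complex_of_real (Arg (lam k)))"
      by (simp only:)
    also have "\<dots> = cis (Arg (lam k))" by (simp only: cis_conv_exp)
    also have "\<dots> = sgn (lam k)" using ne by (rule cis_Arg)
    also have "\<dots> = lam k" using unit[of k] by (simp add: sgn_div_norm)
    finally show ?thesis by simp
  qed
  have b2: "cmod (lam k ^ n - 1) \<le> 2" for k n
    using norm_triangle_ineq4[of "lam k ^ n" 1] unit[of k] by (simp add: norm_power)
  have s0: "0 \<le> s n" for n
    unfolding s_def by (rule order_trans[OF norm_ge_zero cSUP_upper[of 0]]) (auto intro: bdd_aboveI2[where M=2] b2)
  have sle: "s (ks j) \<le> opn (ks j)" for j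
    unfolding s_def by (rule cSUP_least) (auto intro: opl)
  have lim_le: "liminf (\<lambda>n. ereal (s n)) \<le> 0"
  proof -
    have "liminf (\<lambda>n. ereal (s n)) \<le> liminf ((\<lambda>n. ereal (s n)) \<circ> ks)" by (rule liminf_subseq_mono[OF ks(1)])
    also have "\<dots> \<le> liminf (\<lambda>j. ereal (opn (ks j)))"
      by (rule Liminf_mono) (auto simp: sle)
    also have "\<dots> = 0"
    proof (rule lim_imp_Liminf)
      show "(\<lambda>j. ereal (opn (ks j))) \<longlonglongrightarrow> 0" using op0 by (simp add: zero_ereal_def)
    qed simp
    finally show ?thesis .
  qed
  have lim_ge: "0 \<le> liminf (\<lambda>n. ereal (s n))"
    by (rule Liminf_bounded) (auto simp: s0)
  have "(SUP k. cmod (exp (2 * pi * \<i> * of_nat n * complex_of_real (\<theta> k)) - 1)) = s n" for n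
    unfolding s_def using expn[of lam \<theta>, OF th] by simp
  hence "liminf (\<lambda>n::nat. ereal (SUP k. cmod (exp (2 * pi * \<i> * of_nat n * complex_of_real (\<theta> k)) - 1))) = 0"
    using lim_le lim_ge by simp
  thus ?R using th by blast
next
  define s where "s n = (SUP k. cmod (lam k ^ n - 1))" for n
  assume ?R
  then obtain \<theta> where th: "\<And>k. lam k = exp (2 * pi * \<i> * complex_of_real (\<theta> k))"
    and li: "liminf (\<lambda>n::nat. ereal (SUP k. cmod (exp (2 * pi * \<i> * of_nat n * complex_of_real (\<theta> k)) - 1))) = 0"
    by blast
  have "(SUP k. cmod (exp (2 * pi * \<i> * of_nat n * complex_of_real (\<theta> k)) - 1)) = s n" for n
    unfolding s_def using expn[of lam \<theta>, OF th] by simp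
  hence li': "liminf (\<lambda>n. ereal (s n)) = 0" using li by simp
  have unit: "cmod (lam k) = 1" for k
  proof -
    have "2 * pi * \<i> * complex_of_real (\<theta> k) = \<i> * complex_of_real (2 * pi * \<theta> k)" by simp
    thus ?thesis using th[of k] norm_exp_i_times by metis
  qed
  have b2: "cmod (lam k ^ n - 1) \<le> 2" for k n
    using norm_triangle_ineq4[of "lam k ^ n" 1] unit[of k] by (simp add: norm_power)
  have sup: "cmod (lam k ^ n - 1) \<le> s n" for k n
    unfolding s_def by (rule cSUP_upper) (auto intro: bdd_aboveI2[where M=2] b2)
  define opn where "opn n = op_norm X N (\<lambda>x k. (lam k ^ n - 1) * x k)" for n
  have opb: "opn n \<le> s n \<and> 0 \<le> opn n" for n
    using opn[OF g, of "\<lambda>k. lam k ^ n - 1" "s n"] sup unfolding opn_def by blast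
  have fr: "\<exists>n\<ge>M. s n < e" if "e > 0" for e M using liminf_freq[OF li' that] .
  define ks where "ks = pick s"
  have kp: "ks j \<ge> 1 \<and> s (ks j) < 1 / real (Suc j) \<and> ks (Suc j) > ks j" for j
    unfolding ks_def by (rule pick_prop) (rule fr)
  have "strict_mono ks" using kp by (simp add: strict_mono_Suc_iff)
  moreover have "\<forall>n. ks n > 0" using kp by (auto simp: Suc_le_eq)
  moreover have "(\<lambda>j. opn (ks j)) \<longlonglongrightarrow> 0"
  proof (rule Lim_null_comparison[OF always_eventually LIMSEQ_inverse_real_of_nat], intro allI)
    fix j
    show "norm (opn (ks j)) \<le> inverse (real (Suc j))"
      using opb[of "ks j"] kp[of j] by (simp add: divide_inverse)
  qed
  ultimately show ?L unfolding uniformly_rigid_def powfun opn_def by blast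
qed

theorem theorem5p4:
  fixes X :: "(nat \<Rightarrow> complex) set" and N :: "(nat \<Rightarrow> complex) \<Rightarrow> real"
    and lam :: "nat \<Rightarrow> complex"
  assumes "admissible_space X N"
    and "bounded (range lam)"
  shows "(recurrent X N (diag_op lam) \<longleftrightarrow> rigid X N (diag_op lam))
       \<and> (rigid X N (diag_op lam) \<longleftrightarrow> (\<forall>k. cmod (lam k) = 1))
       \<and> (uniformly_rigid X N (diag_op lam) \<longleftrightarrow>
            (\<exists>\<theta>::nat \<Rightarrow> real. (\<forall>k. lam k = exp (2 * pi * \<i> * complex_of_real (\<theta> k)))
               \<and> liminf (\<lambda>n::nat. ereal (SUP k. cmod (exp (2 * pi * \<i> * of_nat n * complex_of_real (\<theta> k)) - 1))) = 0))"
proof -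
  have g: "gs X N" using assms(1) by (rule gs_adm)
  have r1: "rigid X N (diag_op lam) \<Longrightarrow> recurrent X N (diag_op lam)"
    by (rule rigid_imp_recurrent[OF g assms(2)])
  have r2: "recurrent X N (diag_op lam) \<Longrightarrow> \<forall>k. cmod (lam k) = 1"
    using recurrent_unit[OF g] by blast
  have r3: "\<forall>k. cmod (lam k) = 1 \<Longrightarrow> rigid X N (diag_op lam)"
    using unit_rigid[OF g] by blast
  show ?thesis using r1 r2 r3 partB[OF g assms(2)] by blast
qed

end
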